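(* Let $A\in\mathbb{C}^{n\times n}$ be accretive and $\theta\in[0,\pi/2)\cap\Psi(A)$. Let $A_h=(A+A^* )/2$ and $A_s=(A-A^* )/(2j)$. Then $\gamma_\theta(A)=\max\{\sqrt{g^\star},\sqrt{h^\star}\}$, where $g^\star$ and $h^\star$ are the optimal values of the semidefinite programs $$\min_{g,\tau}\ g\quad\text{s.t.}\quad A^*A-gI+\tau(-A_h\tan\theta+A_s)\le0,\ \tau\ge0,\ g\ge0,$$ $$\min_{h,\tau}\ h\quad\text{s.t.}\quad A^*A-hI+\tau(-A_h\tan\theta-A_s)\le0,\ \tau\ge0,\ h\ge0.$$
   Context: Matrix inequality $\le0$ means negative semidefinite. For sectorial $A$ (i.e. $0\notin\{x^*Ax:\|x\|=1\}$), write $A=T^*DT$ with $T$ nonsingular, $D$ diagonal unitary; the phases $\bar\phi(A)\ge\dots\ge\underline\phi(A)$ are the arguments of the diagonal entries of $D$ with $\bar\phi-\underline\phi<\pi$ and $(\bar\phi+\underline\phi)/2\in(-\pi,\pi]$, and $\Psi(A)=[\underline\phi(A),\bar\phi(A)]$. $A$ is accretive if it is sectorial with $\Psi(A)\subset(-\pi/2,\pi/2)$. $\mathcal{DW}(A)=\{(\mathrm{Re}\,x^*Ax,\mathrm{Im}\,x^*Ax,\|Ax\|^2):x\in\mathbb{C}^n,\|x\|=1\}$. For sectorial $A$ and $\theta\in[0,\pi)\cap\Psi(A)$, the constrained gain range is $\mathcal{R}_{\ge\theta}(A)=\{h\ge0:\ \exists z\in\mathbb{C},\ \angle z\notin(-\theta,\theta),\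 (\mathrm{Re}\,z,\mathrm{Im}\,z,h^2)\in\mathcal{DW}(A)\}$ (with $\angle z\in(-\pi,\pi]$), and the constrained gain is $\gamma_\theta(A)=\max\mathcal{R}_{\ge\theta}(A)$. *)

theory Defs
  imports "HOL-Analysis.Analysis"
begin

text \<open>Complex n x n matrices are modelled as complex^'n^'n (index type 'n finite).\<close>

definition cadj :: "complex^'n^'m \<Rightarrow> complex^'m^'n" where
  "cadj M = (\<chi> i j. cnj (M $ j $ i))"

definition cinner :: "complex^'n \<Rightarrow> complex^'n \<Rightarrow> complex" where
  "cinner x y = (\<Sum>i\<in>UNIV. cnj (x $ i) * y $ i)"

definition cscale :: "complex \<Rightarrow> complex^'n^'m \<Rightarrow> complex^'n^'m" where
  "cscale c M = (\<chi> i j. c * M $ i $ j)"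

definition neg_semidef :: "complex^'n^'n \<Rightarrow> bool" where
  "neg_semidef M \<longleftrightarrow> cadj M = M \<and> (\<forall>x. Re (cinner x (M *v x)) \<le> 0)"

definition sectorial :: "complex^'n^'n \<Rightarrow> bool" where
  "sectorial A \<longleftrightarrow> 0 \<notin> {cinner x (A *v x) | x. norm x = 1}"

definition diag_unitary :: "('n \<Rightarrow> real) \<Rightarrow> complex^'n^'n" where
  "diag_unitary \<phi> = (\<chi> i j. if i = j then exp (\<i> * complex_of_real (\<phi> i)) else 0)"

definition phase_decomp :: "complex^'n^'n \<Rightarrow> complex^'n^'n \<Rightarrow> ('n::finite \<Rightarrow> real) \<Rightarrow> bool" where
  "phase_decomp A T \<phi> \<longleftrightarrow> invertible T \<and> A = cadj T ** diag_unitary \<phi> ** T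
     \<and> Max (range \<phi>) - Min (range \<phi>) < pi
     \<and> - pi < (Max (range \<phi>) + Min (range \<phi>)) / 2
     \<and> (Max (range \<phi>) + Min (range \<phi>)) / 2 \<le> pi"

definition Psi :: "complex^'n::finite^'n \<Rightarrow> real set" where
  "Psi A = {t. \<exists>T \<phi>. phase_decomp A T \<phi> \<and> Min (range \<phi>) \<le> t \<and> t \<le> Max (range \<phi>)}"

definition accretive :: "complex^'n::finite^'n \<Rightarrow> bool" where
  "accretive A \<longleftrightarrow> sectorial A \<and> Psi A \<subseteq> {-pi/2<..<pi/2}"

definition DW :: "complex^'n^'n \<Rightarrow> (real \<times> real \<times> real) set" where
  "DW A = {(Re (cinner x (A *v x)), Im (cinner x (A *v x)), (norm (A *v x))^2) | x. norm x = 1}"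

definition gain_range :: "real \<Rightarrow> complex^'n^'n \<Rightarrow> real set" where
  "gain_range \<theta> A = {h. h \<ge> 0 \<and> (\<exists>z::complex. \<not> (- \<theta> < Arg z \<and> Arg z < \<theta>)
       \<and> (Re z, Im z, h^2) \<in> DW A)}"

definition cgain :: "real \<Rightarrow> complex^'n^'n \<Rightarrow> real" where
  "cgain \<theta> A = (GREATEST h. h \<in> gain_range \<theta> A)"

definition herm_part :: "complex^'n^'n \<Rightarrow> complex^'n^'n" where
  "herm_part A = cscale (1/2) (A + cadj A)"

definition skew_part :: "complex^'n^'n \<Rightarrow> complex^'n^'n" where
  "skew_part A = cscale (1 / (2 * \<i>)) (A - cadj A)"

end

theory Submission
  imports Defs
begin

definition qf :: "complex^'n^'n \<Rightarrow> complex^'n \<Rightarrow> real" where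
  "qf M x = Re (cinner x (M *v x))"

lemma cinner_adj: "cinner x (cadj M *v y) = cinner (M *v x) y"
proof -
  have "cinner x (cadj M *v y) = (\<Sum>i\<in>UNIV. \<Sum>j\<in>UNIV. cnj (x$i) * cnj (M$j$i) * y$j)"
    unfolding cinner_def cadj_def matrix_vector_mult_def by (simp add: sum_distrib_left mult.assoc)
  also have "... = (\<Sum>j\<in>UNIV. \<Sum>i\<in>UNIV. cnj (x$i) * cnj (M$j$i) * y$j)"
    by (rule sum.swap)
  also have "... = cinner (M *v x) y"
    unfolding cinner_def cadj_def matrix_vector_mult_def by (simp add: sum_distrib_right sum_distrib_left mult_ac)
  finally show ?thesis .
qed

lemma cinner_commute: "cinner y x = cnj (cinner x y)"
  unfolding cinner_def by (simp add: mult.commute)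

lemma cinner_add_right: "cinner x (y + z) = cinner x y + cinner x z"
  unfolding cinner_def by (simp add: distrib_left sum.distrib)

lemma cinner_add_left: "cinner (x + y) z = cinner x z + cinner y z"
  unfolding cinner_def by (simp add: distrib_right sum.distrib)

lemma cinner_smult_right: "cinner x (c *s y) = c * cinner x y"
  unfolding cinner_def by (simp add: sum_distrib_left mult_ac)

lemma cinner_smult_left: "cinner (c *s x) y = cnj c * cinner x y"
  unfolding cinner_def by (simp add: sum_distrib_left mult_ac)

lemma cinner_self: "cinner x x = complex_of_real ((norm x)^2)"
proof -
  have "(norm x)^2 = (\<Sum>i\<in>UNIV. (cmod (x$i))^2)"
    unfolding norm_vec_def L2_set_def by (simp add: sum_nonneg)
  then have "complex_of_real ((norm x)^2) = (\<Sum>i\<in>UNIV. complex_of_real ((cmod (x$i))^2))"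
    by simp
  also have "... = (\<Sum>i\<in>UNIV. cnj (x$i) * x$i)"
    by (simp only: complex_norm_square mult.commute)
  finally show ?thesis unfolding cinner_def by simp
qed

lemma mv_smult: "M *v (c *s x) = c *s (M *v (x::complex^'n))"
  by (simp add: vec_eq_iff matrix_vector_mult_def sum_distrib_left mult_ac)

lemma scaleR_smult: "r *\<^sub>R (x::complex^'n) = complex_of_real r *s x"
  unfolding vec_eq_iff vector_scaleR_component vector_smult_component
  by (simp only: scaleR_conv_of_real simp_thms)

lemma qf_add: "qf (M + N) x = qf M x + qf N x"
  unfolding qf_def by (simp add: matrix_vector_mult_add_rdistrib cinner_add_right)

lemma qf_diff: "qf (M - N) x = qf M x - qf N x"
  unfolding qf_def by (simp add: matrix_vector_mult_diff_rdistrib cinner_def sum_subtractf right_diff_distrib)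

lemma qf_uminus: "qf (- M) x = - qf M x"
  unfolding qf_def by (simp add: cinner_def matrix_vector_mult_def sum_negf)

lemma mv_scaleR: "(r *\<^sub>R M) *v x = r *\<^sub>R (M *v (x::complex^'n))"
  unfolding vec_eq_iff vector_scaleR_component matrix_vector_mult_def vec_lambda_beta
  by (simp add: scaleR_sum_right)

lemma qf_scaleR: "qf (r *\<^sub>R M) x = r * qf M x"
  unfolding qf_def mv_scaleR scaleR_smult cinner_smult_right by simp

lemma qf_zero: "qf M 0 = 0"
  unfolding qf_def by (simp add: cinner_def)

lemma qf_hom: "qf M (r *\<^sub>R x) = r^2 * qf M x"
  unfolding qf_def scaleR_smult mv_smult cinner_smult_left cinner_smult_right
  by (simp add: power2_eq_square mult.assoc)

lemma qf_AA: "qf (cadj A ** A) x = (norm (A *v x))^2"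
  unfolding qf_def by (simp add: matrix_vector_mul_assoc[symmetric] cinner_adj cinner_self)

lemma qf_id: "qf (cscale (complex_of_real g) (mat 1)) x = g * (norm x)^2"
proof -
  have "cscale (complex_of_real g) (mat 1) *v x = complex_of_real g *s x"
    by (simp add: vec_eq_iff matrix_vector_mult_def cscale_def mat_def if_distrib if_distribR cong: if_cong)
  then show ?thesis unfolding qf_def by (simp add: cinner_smult_right cinner_self)
qed

lemma cscale_mv: "cscale c M *v x = c *s (M *v x)"
  by (simp add: vec_eq_iff matrix_vector_mult_def cscale_def sum_distrib_left mult_ac)

lemma qf_herm: "qf (herm_part A) x = Re (cinner x (A *v x))"
  unfolding qf_def herm_part_def cscale_mv
  by (simp add: cinner_smult_right matrix_vector_mult_add_rdistrib cinner_add_right cinner_adj cinner_commute[of x "A *v x"])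

lemma cinner_diff_right: "cinner x (y - z) = cinner x y - cinner x z"
  unfolding cinner_def by (simp add: right_diff_distrib sum_subtractf)

lemma l1: "1 / (2 * \<i>) * (complex_of_real (2*t) * \<i>) = complex_of_real t"
  by (simp add: field_simps)

lemma qf_skew: "qf (skew_part A) x = Im (cinner x (A *v x))"
proof -
  have e: "cinner x (cadj A *v x) = cnj (cinner x (A *v x))"
    by (simp add: cinner_adj cinner_commute[of x "A *v x"])
  have "cinner x (skew_part A *v x) = 1 / (2 * \<i>) * (complex_of_real (2 * Im (cinner x (A *v x))) * \<i>)"
    unfolding skew_part_def cscale_mv cinner_smult_right matrix_vector_mult_diff_rdistrib
      cinner_diff_right e complex_diff_cnj by simp
  also have "... = complex_of_real (Im (cinner x (A *v x)))" by (simp only: l1)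
  finally show ?thesis unfolding qf_def by (simp only: Re_complex_of_real)
qed


lemma cadj_add: "cadj (M + N) = cadj M + cadj N"
  by (simp add: cadj_def vec_eq_iff)
lemma cadj_diff: "cadj (M - N) = cadj M - cadj N"
  by (simp add: cadj_def vec_eq_iff)
lemma cadj_uminus: "cadj (- M) = - cadj M"
  by (simp add: cadj_def vec_eq_iff)
lemma cadj_scaleR: "cadj (r *\<^sub>R M) = r *\<^sub>R cadj M"
  by (simp add: cadj_def vec_eq_iff)
lemma cadj_cadj: "cadj (cadj M) = M"
  by (simp add: cadj_def vec_eq_iff)
lemma cadj_mult: "cadj (M ** N) = cadj N ** cadj M"
  by (simp add: cadj_def vec_eq_iff matrix_matrix_mult_def mult.commute)
lemma cadj_cscale: "cadj (cscale c M) = cscale (cnj c) (cadj M)"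
  by (simp add: cadj_def vec_eq_iff cscale_def)
lemma cadj_mat1: "cadj (mat 1 :: complex^'n^'n) = mat 1"
  by (simp add: cadj_def vec_eq_iff mat_def)

lemma herm_AA: "cadj (cadj A ** A) = cadj A ** A"
  by (simp add: cadj_mult cadj_cadj)
lemma herm_id: "cadj (cscale (complex_of_real g) (mat 1) :: complex^'n^'n) = cscale (complex_of_real g) (mat 1)"
  by (simp add: cadj_cscale cadj_mat1)
lemma herm_herm: "cadj (herm_part A) = herm_part A"
  unfolding herm_part_def by (simp add: cadj_cscale cadj_add cadj_cadj add.commute)
lemma herm_skew: "cadj (skew_part A) = skew_part A"
proof -
  have "cnj (1 / (2 * \<i>)) = - (1 / (2 * \<i>))" by (simp add: complex_eq_iff)
  moreover have "cscale (- c) (M - N) = cscale c (N - M)" for c and M N :: "complex^'n^'n"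
    by (simp add: cscale_def vec_eq_iff algebra_simps)
  ultimately show ?thesis unfolding skew_part_def
    by (simp add: cadj_cscale cadj_diff cadj_cadj) (simp add: cscale_def vec_eq_iff algebra_simps)
qed

lemma cinner_add_left': "cinner (x + y) z = cinner x z + cinner y z"
  by (rule cinner_add_left)

lemma qf_expand:
  assumes "cadj M = M"
  shows "qf M (x + c *s y) = qf M x + 2 * Re (c * cinner x (M *v y)) + (cmod c)^2 * qf M y"
proof -
  have yx: "cinner y (M *v x) = cnj (cinner x (M *v y))"
    using cinner_adj[of y M x] assms by (simp add: cinner_commute[of "M *v y" x])
  have "cinner (x + c *s y) (M *v (x + c *s y)) =
        cinner x (M *v x) + c * cinner x (M *v y) + cnj c * cnj (cinner x (M *v y))
        + (cnj c * c) * cinner y (M *v y)"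
    by (simp add: matrix_vector_right_distrib mv_smult cinner_add_left cinner_add_right
        cinner_smult_left cinner_smult_right yx algebra_simps)
  also have "cnj c * c = complex_of_real ((cmod c)^2)"
    by (simp only: complex_norm_square mult.commute)
  finally have e: "cinner (x + c *s y) (M *v (x + c *s y)) =
        cinner x (M *v x) + c * cinner x (M *v y) + cnj c * cnj (cinner x (M *v y))
        + complex_of_real ((cmod c)^2) * cinner y (M *v y)" .
  have r: "Re (cnj c * cnj p) = Re (c * p)" for p :: complex by simp
  show ?thesis unfolding qf_def e by (simp only: plus_complex.sel r) simp
qed

lemma qf_cont: "continuous_on UNIV (qf M)"
  unfolding qf_def[abs_def] cinner_def matrix_vector_mult_def
  by (intro continuous_intros)


lemma two_dim:
  assumes hG: "cadj G = G" and hH: "cadj H = H"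
    and gx: "qf G x > 0" and gy: "qf G y < 0" and hx: "qf H x > 0" and hy: "qf H y > 0"
  shows "\<exists>w. qf G w = 0 \<and> qf H w > 0"
proof -
  define b where "b = cinner x (G *v y)"
  define p where "p = cinner x (H *v y)"
  define u0 where "u0 = (if b = 0 then 1 else \<i> * cnj b)"
  have u0: "u0 \<noteq> 0" "Re (u0 * b) = 0"
    unfolding u0_def by auto
  define u where "u = (if Re (u0 * p) \<ge> 0 then u0 else - u0)"
  have u: "u \<noteq> 0" "Re (u * b) = 0" "Re (u * p) \<ge> 0"
    using u0 unfolding u_def by auto
  have cu: "(cmod u)^2 > 0" using u by simp
  define t where "t = sqrt (qf G x / ((cmod u)^2 * (- qf G y)))"
  have nn: "0 \<le> qf G x / ((cmod u)^2 * (- qf G y))"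
    using gx gy cu by (intro divide_nonneg_pos mult_pos_pos) auto
  have t0: "t \<ge> 0" unfolding t_def using nn by simp
  have t2: "t^2 = qf G x / ((cmod u)^2 * (- qf G y))"
    unfolding t_def using nn by simp
  define c where "c = complex_of_real t * u"
  have cc: "(cmod c)^2 = t^2 * (cmod u)^2"
    unfolding c_def by (simp add: norm_mult power_mult_distrib t0)
  have Rb: "Re (c * b) = t * Re (u * b)" unfolding c_def by (simp add: algebra_simps)
  have Rp: "Re (c * p) = t * Re (u * p)" unfolding c_def by (simp add: algebra_simps)
  define w where "w = x + c *s y"
  have "qf G w = qf G x + t^2 * (cmod u)^2 * qf G y"
    unfolding w_def qf_expand[OF hG] b_def[symmetric] Rb cc u by simp
  also have "... = 0" unfolding t2 using gx gy cu by (simp add: field_simps)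
  finally have g0: "qf G w = 0" .
  have "qf H w = qf H x + 2 * (t * Re (u * p)) + t^2 * (cmod u)^2 * qf H y"
    unfolding w_def qf_expand[OF hH] p_def[symmetric] Rp cc by simp
  also have "... > 0" using hx hy u t0 cu
    by (intro add_pos_nonneg add_nonneg_nonneg) (auto intro!: mult_nonneg_nonneg)
  finally show ?thesis using g0 by blast
qed

lemma pair_ineq:
  assumes hF: "cadj F = F" and hG: "cadj G = G"
    and H: "\<And>w. w \<noteq> 0 \<Longrightarrow> qf G w \<ge> 0 \<Longrightarrow> qf F w < 0"
    and gx: "qf G x > 0" and gy: "qf G y < 0"
  shows "- qf F y / qf G y \<le> - qf F x / qf G x"
proof (rule ccontr)
  assume "\<not> ?thesis"
  then have lt: "- qf F x / qf G x < - qf F y / qf G y" by simp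
  define \<tau> where "\<tau> = (- qf F x / qf G x + - qf F y / qf G y) / 2"
  have a: "- qf F x / qf G x < \<tau>" and b: "\<tau> < - qf F y / qf G y"
    using lt unfolding \<tau>_def by auto
  define K where "K = F + \<tau> *\<^sub>R G"
  have hK: "cadj K = K" unfolding K_def by (simp add: cadj_add cadj_scaleR hF hG)
  have qK: "qf K v = qf F v + \<tau> * qf G v" for v unfolding K_def by (simp add: qf_add qf_scaleR)
  have "- qf F x < \<tau> * qf G x" using a gx by (simp add: field_simps)
  then have kx: "qf K x > 0" unfolding qK by simp
  have "\<tau> * qf G y > - qf F y" using b gy by (simp add: field_simps)
  then have ky: "qf K y > 0" unfolding qK by simp
  obtain w where w: "qf G w = 0" "qf K w > 0" using two_dim[OF hG hK gx gy kx ky] by blast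
  then have fw: "qf F w > 0" unfolding qK by simp
  then have "w \<noteq> 0" by (auto simp: qf_zero)
  with H[of w] w fw show False by simp
qed


lemma unit_to_all:
  assumes "\<And>u. norm u = 1 \<Longrightarrow> qf F u + \<tau> * qf G u \<le> 0"
  shows "qf F x + \<tau> * qf G x \<le> 0"
proof (cases "x = 0")
  case True then show ?thesis by (simp add: qf_zero)
next
  case False
  define u where "u = (1 / norm x) *\<^sub>R x"
  have nu: "norm u = 1" unfolding u_def using False by simp
  have xu: "x = norm x *\<^sub>R u" unfolding u_def using False by simp
  have "qf F x + \<tau> * qf G x = (norm x)^2 * (qf F u + \<tau> * qf G u)"
    by (subst (1 2) xu) (simp add: qf_hom algebra_simps)
  also have "... \<le> 0" using assms[OF nu] by (simp add: mult_nonneg_nonpos)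
  finally show ?thesis .
qed

lemma slemma:
  fixes F G :: "complex^'n^'n"
  assumes hF: "cadj F = F" and hG: "cadj G = G"
    and H: "\<And>w. w \<noteq> 0 \<Longrightarrow> qf G w \<ge> 0 \<Longrightarrow> qf F w < 0"
  shows "\<exists>\<tau>\<ge>0. \<forall>x. qf F x + \<tau> * qf G x \<le> 0"
proof (cases "\<exists>x0. qf G x0 > 0")
  case True
  then obtain x0 where x0: "qf G x0 > 0" by blast
  have "x0 \<noteq> 0" using x0 by (auto simp: qf_zero)
  then have fx0: "qf F x0 < 0" using H x0 by simp
  define L where "L = insert 0 {- qf F y / qf G y | y. qf G y < 0}"
  have Lb: "l \<le> - qf F x / qf G x" if "l \<in> L" "qf G x > 0" for l x
  proof -
    have "x \<noteq> 0" using that by (auto simp: qf_zero)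
    then have "qf F x < 0" using H that by simp
    then have "0 \<le> - qf F x / qf G x" using that by (simp add: divide_nonpos_pos)
    then show ?thesis using that pair_ineq[OF hF hG H, of x] unfolding L_def by auto
  qed
  have bdd: "bdd_above L" using Lb[OF _ x0] by (intro bdd_aboveI[where M="- qf F x0 / qf G x0"]) auto
  define \<tau> where "\<tau> = Sup L"
  have t0: "\<tau> \<ge> 0" unfolding \<tau>_def L_def using bdd unfolding L_def by (intro cSup_upper) auto
  have "qf F x + \<tau> * qf G x \<le> 0" for x
  proof (cases "qf G x < 0")
    case True
    then have "- qf F x / qf G x \<in> L" unfolding L_def by blast
    then have "- qf F x / qf G x \<le> \<tau>" unfolding \<tau>_def using bdd by (intro cSup_upper)
    then show ?thesis using True by (simp add: field_simps)
  next
    case False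
    show ?thesis
    proof (cases "qf G x = 0")
      case True
      then show ?thesis using H[of x] by (cases "x = 0") (auto simp: qf_zero)
    next
      case False
      with \<open>\<not> qf G x < 0\<close> have gx: "qf G x > 0" by simp
      have "\<tau> \<le> - qf F x / qf G x" unfolding \<tau>_def
      proof (rule cSup_least)
        show "L \<noteq> {}" unfolding L_def by simp
      next
        fix l assume "l \<in> L"
        then show "l \<le> - qf F x / qf G x" by (rule Lb[OF _ gx])
      qed
      then show ?thesis using gx by (simp add: field_simps)
    qed
  qed
  then show ?thesis using t0 by blast
next
  case False
  then have gle: "qf G x \<le> 0" for x by (simp add: not_less)
  define S where "S = sphere (0::complex^'n) 1"
  have cS: "compact S" unfolding S_def by simp
  have neS: "S \<noteq> {}" unfolding S_def by simp
  define K where "K = S \<inter> {x. 0 \<le> qf F x}"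
  have cK: "compact K" unfolding K_def
    by (intro compact_Int_closed cS closed_Collect_le continuous_on_const qf_cont)
  obtain x2 where x2: "x2 \<in> S" "\<And>y. y \<in> S \<Longrightarrow> qf F y \<le> qf F x2"
    using continuous_attains_sup[OF cS neS continuous_on_subset[OF qf_cont[of F] subset_UNIV]]
    by blast
  show ?thesis
  proof (cases "K = {}")
    case True
    have "qf F u + 0 * qf G u \<le> 0" if "norm u = 1" for u
      using True that unfolding K_def S_def by auto
    then show ?thesis using unit_to_all[of F 0 G] by blast
  next
    case False
    obtain x1 where x1: "x1 \<in> K" "\<And>y. y \<in> K \<Longrightarrow> qf G y \<le> qf G x1"
      using continuous_attains_sup[OF cK False continuous_on_subset[OF qf_cont[of G] subset_UNIV]]
      by blast
    have "x1 \<noteq> 0" using x1 unfolding K_def S_def by auto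
    moreover have "qf F x1 \<ge> 0" using x1 unfolding K_def by auto
    ultimately have "qf G x1 \<noteq> 0" using H[of x1] by auto
    then have d: "qf G x1 < 0" using gle[of x1] by simp
    define \<tau> where "\<tau> = max 0 (qf F x2) / (- qf G x1)"
    have t0: "\<tau> \<ge> 0" unfolding \<tau>_def using d by (intro divide_nonneg_pos) auto
    have "qf F u + \<tau> * qf G u \<le> 0" if "norm u = 1" for u
    proof (cases "u \<in> K")
      case True
      have "\<tau> * qf G u \<le> \<tau> * qf G x1" using x1(2)[OF True] t0 by (simp add: mult_left_mono)
      also have "\<tau> * qf G x1 = - max 0 (qf F x2)" unfolding \<tau>_def using d by simp
      finally have "\<tau> * qf G u \<le> - max 0 (qf F x2)" .
      moreover have "qf F u \<le> qf F x2" using x2(2)[of u] that unfolding S_def by simp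
      ultimately show ?thesis by linarith
    next
      case False
      then have "qf F u < 0" using that unfolding K_def S_def by auto
      moreover have "\<tau> * qf G u \<le> 0" using t0 gle[of u] by (simp add: mult_nonneg_nonpos)
      ultimately show ?thesis by linarith
    qed
    then show ?thesis using unit_to_all[of F \<tau> G] t0 by blast
  qed
qed


lemma qf_main:
  "qf (cadj A ** A - cscale (complex_of_real g) (mat 1) + \<tau> *\<^sub>R B) x
     = (norm (A *v x))^2 - g * (norm x)^2 + \<tau> * qf B x"
  by (simp add: qf_add qf_diff qf_AA qf_id qf_scaleR)

lemma neg_semidef_qf: "neg_semidef M \<Longrightarrow> qf M x \<le> 0"
  unfolding neg_semidef_def qf_def by blast

lemma sdp_lower:
  assumes "g \<in> {g. \<exists>\<tau>. \<tau> \<ge> 0 \<and> g \<ge> 0 \<and>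
            neg_semidef (cadj A ** A - cscale (complex_of_real g) (mat 1) + \<tau> *\<^sub>R B)}"
    and "norm x = 1" and "qf B x \<ge> 0"
  shows "(norm (A *v x))^2 \<le> g"
proof -
  obtain \<tau> where t: "\<tau> \<ge> 0" and n: "neg_semidef (cadj A ** A - cscale (complex_of_real g) (mat 1) + \<tau> *\<^sub>R B)"
    using assms(1) by blast
  have "(norm (A *v x))^2 - g + \<tau> * qf B x \<le> 0"
    using neg_semidef_qf[OF n, of x] unfolding qf_main using assms(2) by simp
  moreover have "\<tau> * qf B x \<ge> 0" using t assms(3) by simp
  ultimately show ?thesis by linarith
qed

lemma sdp_upper:
  fixes A B :: "complex^'n^'n"
  assumes hB: "cadj B = B" and c0: "c \<ge> 0"
    and bound: "\<And>x. norm x = 1 \<Longrightarrow> qf B x \<ge> 0 \<Longrightarrow> (norm (A *v x))^2 \<le> c"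
    and e: "e > 0"
  shows "c + e \<in> {g. \<exists>\<tau>. \<tau> \<ge> 0 \<and> g \<ge> 0 \<and>
            neg_semidef (cadj A ** A - cscale (complex_of_real g) (mat 1) + \<tau> *\<^sub>R B)}"
proof -
  define F where "F = cadj A ** A - cscale (complex_of_real (c + e)) (mat 1)"
  have hF: "cadj F = F" unfolding F_def by (simp only: cadj_diff herm_AA herm_id)
  have qF: "qf F w = (norm (A *v w))^2 - (c + e) * (norm w)^2" for w
    unfolding F_def by (simp only: qf_diff qf_AA qf_id)
  have H: "qf F w < 0" if w: "w \<noteq> 0" "qf B w \<ge> 0" for w
  proof -
    define u where "u = (1 / norm w) *\<^sub>R w"
    have nu: "norm u = 1" unfolding u_def using w by simp
    have wu: "w = norm w *\<^sub>R u" unfolding u_def using w by simp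
    have "qf B w = (norm w)^2 * qf B u" by (subst wu) (simp add: qf_hom)
    then have "qf B u \<ge> 0" using w by (simp add: zero_le_mult_iff)
    then have "qf (cadj A ** A) u \<le> c" using bound[OF nu] by (simp add: qf_AA)
    moreover have "qf (cadj A ** A) w = (norm w)^2 * qf (cadj A ** A) u" by (subst wu) (simp add: qf_hom)
    ultimately have "(norm (A *v w))^2 \<le> (norm w)^2 * c"
      by (simp add: qf_AA mult_left_mono)
    moreover have "(norm w)^2 * c < (c + e) * (norm w)^2" using w e by (simp add: algebra_simps)
    ultimately show ?thesis unfolding qF by simp
  qed
  obtain \<tau> where t: "\<tau> \<ge> 0" "\<And>x. qf F x + \<tau> * qf B x \<le> 0"
    using slemma[OF hF hB H] by blast
  have "neg_semidef (F + \<tau> *\<^sub>R B)"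
    unfolding neg_semidef_def
  proof
    show "cadj (F + \<tau> *\<^sub>R B) = F + \<tau> *\<^sub>R B" by (simp add: cadj_add cadj_scaleR hF hB)
    show "\<forall>x. Re (cinner x ((F + \<tau> *\<^sub>R B) *v x)) \<le> 0"
      using t(2) by (simp add: qf_def[symmetric] qf_add qf_scaleR)
  qed
  then show ?thesis using t(1) c0 e unfolding F_def by (intro CollectI exI[of _ \<tau>]) auto
qed

lemma sdp_value:
  fixes A B :: "complex^'n^'n"
  assumes hB: "cadj B = B" and c0: "c \<ge> 0"
    and bound: "\<And>x. norm x = 1 \<Longrightarrow> qf B x \<ge> 0 \<Longrightarrow> (norm (A *v x))^2 \<le> c"
  defines "S \<equiv> {g. \<exists>\<tau>. \<tau> \<ge> 0 \<and> g \<ge> 0 \<and>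
            neg_semidef (cadj A ** A - cscale (complex_of_real g) (mat 1) + \<tau> *\<^sub>R B)}"
  shows "Inf S \<le> c" "0 \<le> Inf S"
    "\<And>x. norm x = 1 \<Longrightarrow> qf B x \<ge> 0 \<Longrightarrow> (norm (A *v x))^2 \<le> Inf S"
proof -
  have mem: "c + e \<in> S" if "e > 0" for e
    unfolding S_def by (rule sdp_upper[OF hB c0 bound that])
  have bdd: "bdd_below S" unfolding S_def by (intro bdd_belowI[where m=0]) auto
  have ne: "S \<noteq> {}" using mem[of 1] by auto
  show "Inf S \<le> c"
  proof (rule field_le_epsilon)
    fix e :: real assume "e > 0"
    then show "Inf S \<le> c + e" using mem bdd by (intro cInf_lower) auto
  qed
  show "0 \<le> Inf S" using ne by (intro cInf_greatest) (auto simp: S_def)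
  fix x :: "complex^'n" assume "norm x = 1" "qf B x \<ge> 0"
  then show "(norm (A *v x))^2 \<le> Inf S"
    using ne sdp_lower[of _ A B x] by (intro cInf_greatest) (auto simp: S_def)
qed


lemma diag_mv: "diag_unitary \<phi> *v y = (\<chi> k. exp (\<i> * complex_of_real (\<phi> k)) * y $ k)"
  by (simp add: vec_eq_iff matrix_vector_mult_def diag_unitary_def if_distrib if_distribR cong: if_cong)

lemma zform:
  assumes "A = cadj T ** diag_unitary \<phi> ** T"
  shows "cinner x (A *v x) =
    (\<Sum>k\<in>UNIV. exp (\<i> * complex_of_real (\<phi> k)) * complex_of_real ((cmod ((T *v x) $ k))^2))"
proof -
  have "A *v x = cadj T *v (diag_unitary \<phi> *v (T *v x))"
    unfolding assms by (simp add: matrix_vector_mul_assoc matrix_mul_assoc)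
  then have "cinner x (A *v x) = cinner (T *v x) (diag_unitary \<phi> *v (T *v x))"
    by (simp add: cinner_adj)
  also have "... = (\<Sum>k\<in>UNIV. exp (\<i> * complex_of_real (\<phi> k)) * (cnj ((T *v x) $ k) * (T *v x) $ k))"
    unfolding diag_mv cinner_def by (simp add: mult_ac)
  also have "... = (\<Sum>k\<in>UNIV. exp (\<i> * complex_of_real (\<phi> k)) * complex_of_real ((cmod ((T *v x) $ k))^2))"
    by (simp only: complex_norm_square mult.commute[of "cnj _"])
  finally show ?thesis .
qed

lemma Re_term: "Re (exp (\<i> * complex_of_real a) * complex_of_real r) = cos a * r"
  by (simp add: Re_exp)
lemma Im_term: "Im (exp (\<i> * complex_of_real a) * complex_of_real r) = sin a * r"
  by (simp add: Im_exp)

lemma zRe: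
  assumes "A = cadj T ** diag_unitary \<phi> ** T"
  shows "Re (cinner x (A *v x)) = (\<Sum>k\<in>UNIV. cos (\<phi> k) * (cmod ((T *v x) $ k))^2)"
  unfolding zform[OF assms] Re_sum Re_term ..

lemma zIm:
  assumes "A = cadj T ** diag_unitary \<phi> ** T"
  shows "Im (cinner x (A *v x)) = (\<Sum>k\<in>UNIV. sin (\<phi> k) * (cmod ((T *v x) $ k))^2)"
  unfolding zform[OF assms] Im_sum Im_term ..

lemma arg_cond:
  assumes "Re z > 0" and "0 \<le> \<theta>" and "\<theta> < pi/2"
  shows "(\<not> (- \<theta> < Arg z \<and> Arg z < \<theta>)) \<longleftrightarrow>
     (Im z - tan \<theta> * Re z \<ge> 0 \<or> - Im z - tan \<theta> * Re z \<ge> 0)"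
proof -
  have a: "Arg z = arctan (Im z / Re z)" using assms(1) by (rule arg_conv_arctan)
  have t: "arctan (tan \<theta>) = \<theta>" using assms by (intro arctan_tan) auto
  have "- \<theta> < Arg z \<longleftrightarrow> - tan \<theta> < Im z / Re z"
    unfolding a by (subst (1) t[symmetric]) (simp add: arctan_minus[symmetric] arctan_less_iff)
  moreover have "Arg z < \<theta> \<longleftrightarrow> Im z / Re z < tan \<theta>"
    unfolding a by (subst (1) t[symmetric]) (simp add: arctan_less_iff)
  moreover have "- tan \<theta> < Im z / Re z \<longleftrightarrow> - tan \<theta> * Re z < Im z"
    using assms(1) by (simp add: pos_less_divide_eq)
  moreover have "Im z / Re z < tan \<theta> \<longleftrightarrow> Im z < tan \<theta> * Re z"
    using assms(1) by (simp add: pos_divide_less_eq)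
  ultimately show ?thesis by auto
qed


theorem proposition4:
  fixes A :: "complex^'n::finite^'n" and \<theta> :: real
  assumes "accretive A" and "0 \<le> \<theta>" and "\<theta> < pi/2" and "\<theta> \<in> Psi A"
  shows "cgain \<theta> A =
    max (sqrt (Inf {g. \<exists>\<tau>. \<tau> \<ge> 0 \<and> g \<ge> 0 \<and>
            neg_semidef (cadj A ** A - cscale (complex_of_real g) (mat 1)
              + \<tau> *\<^sub>R (- (tan \<theta> *\<^sub>R herm_part A) + skew_part A))}))
        (sqrt (Inf {h. \<exists>\<tau>. \<tau> \<ge> 0 \<and> h \<ge> 0 \<and>
            neg_semidef (cadj A ** A - cscale (complex_of_real h) (mat 1)
              + \<tau> *\<^sub>R (- (tan \<theta> *\<^sub>R herm_part A) - skew_part A))}))"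
proof -
  obtain T \<phi> where pd: "phase_decomp A T \<phi>" and mn: "Min (range \<phi>) \<le> \<theta>" "\<theta> \<le> Max (range \<phi>)"
    using assms(4) unfolding Psi_def by blast
  have fin: "finite (range \<phi>)" by simp
  have Aeq: "A = cadj T ** diag_unitary \<phi> ** T" and invT: "invertible T"
    using pd unfolding phase_decomp_def by auto
  have phiPsi: "\<phi> k \<in> Psi A" for k
    unfolding Psi_def using pd fin by (auto intro!: exI[of _ T] exI[of _ \<phi>] Min_le Max_ge)
  have phib: "-(pi/2) < \<phi> k \<and> \<phi> k < pi/2" for k
    using phiPsi[of k] assms(1) unfolding accretive_def by auto
  have cpos: "cos (\<phi> k) > 0" for k using phib[of k] by (intro cos_gt_zero_pi) auto
  define z where "z x = cinner x (A *v x)" for x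
  have Rez: "Re (z x) > 0" if "x \<noteq> 0" for x
  proof -
    have "T *v x \<noteq> 0"
      using inj_matrix_vector_mult[OF invT] that by (metis injD matrix_vector_mult_0_right)
    then obtain k where k: "(T *v x) $ k \<noteq> 0" by (auto simp: vec_eq_iff)
    show ?thesis unfolding z_def zRe[OF Aeq]
    proof (rule sum_pos2[of UNIV k])
      show "0 < cos (\<phi> k) * (cmod ((T *v x) $ k))^2" using k cpos[of k] by simp
      show "0 \<le> cos (\<phi> i) * (cmod ((T *v x) $ i))^2" if "i \<in> UNIV" for i
        using cpos[of i] by simp
    qed simp_all
  qed
  define B1 where "B1 = - (tan \<theta> *\<^sub>R herm_part A) + skew_part A"
  define B2 where "B2 = - (tan \<theta> *\<^sub>R herm_part A) - skew_part A"
  have hB1: "cadj B1 = B1" unfolding B1_def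
    by (simp only: cadj_add cadj_uminus cadj_scaleR herm_herm herm_skew)
  have hB2: "cadj B2 = B2" unfolding B2_def
    by (simp only: cadj_diff cadj_uminus cadj_scaleR herm_herm herm_skew)
  have q1: "qf B1 x = Im (z x) - tan \<theta> * Re (z x)" for x
    unfolding B1_def z_def by (simp only: qf_add qf_uminus qf_scaleR qf_herm qf_skew diff_conv_add_uminus mult_minus_left)
  have q2: "qf B2 x = - Im (z x) - tan \<theta> * Re (z x)" for x
    unfolding B2_def z_def qf_diff qf_uminus qf_scaleR qf_herm qf_skew by linarith
  define U where "U = {x. norm x = 1 \<and> (qf B1 x \<ge> 0 \<or> qf B2 x \<ge> 0)}"
  have condU: "(\<not> (- \<theta> < Arg (z x) \<and> Arg (z x) < \<theta>)) \<longleftrightarrow> (qf B1 x \<ge> 0 \<or> qf B2 x \<ge> 0)"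
    if "norm x = 1" for x
  proof -
    have "x \<noteq> 0" using that by auto
    then show ?thesis using arg_cond[OF Rez assms(2,3)] q1 q2 by simp
  qed
  obtain k where k: "\<phi> k = Max (range \<phi>)" using Max_in[OF fin] by (metis UNIV_not_empty empty_is_image imageE)
  obtain T' where T': "T ** T' = mat 1" using invT unfolding invertible_def by blast
  define x1 where "x1 = T' *v axis k 1"
  have Tx1: "T *v x1 = axis k 1" unfolding x1_def by (simp add: matrix_vector_mul_assoc T')
  have x1nz: "x1 \<noteq> 0"
  proof
    assume "x1 = 0"
    then have "axis k (1::complex) = 0" using Tx1 by simp
    then show False by (simp add: axis_eq_0_iff)
  qed
  have sq: "(cmod (axis k 1 $ j))^2 = (if j = k then 1 else 0)" for j
    by (simp add: axis_def)
  have Re1: "Re (z x1) = cos (\<phi> k)" unfolding z_def zRe[OF Aeq] Tx1 sq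
    by (simp add: if_distrib cong: if_cong)
  have Im1: "Im (z x1) = sin (\<phi> k)" unfolding z_def zIm[OF Aeq] Tx1 sq
    by (simp add: if_distrib cong: if_cong)
  have "tan \<theta> \<le> tan (\<phi> k)" using mn(2) k phib[of k] assms(2) by (intro tan_mono_le) auto
  moreover have "sin (\<phi> k) = tan (\<phi> k) * cos (\<phi> k)" using cpos[of k] by (simp add: tan_def)
  ultimately have "qf B1 x1 \<ge> 0" unfolding q1 Re1 Im1 using cpos[of k]
    by (simp add: mult_right_mono)
  define x0 where "x0 = (1 / norm x1) *\<^sub>R x1"
  have "norm x0 = 1" unfolding x0_def using x1nz by simp
  moreover have "qf B1 x0 \<ge> 0" unfolding x0_def qf_hom using \<open>qf B1 x1 \<ge> 0\<close> by simp
  ultimately have x0U: "x0 \<in> U" unfolding U_def by simp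
  have UU: "U = sphere 0 1 \<inter> ({x. 0 \<le> qf B1 x} \<union> {x. 0 \<le> qf B2 x})"
    unfolding U_def by auto
  have cU: "compact U" unfolding UU
    by (intro compact_Int_closed compact_sphere closed_Un closed_Collect_le continuous_on_const qf_cont)
  obtain xs where xs: "xs \<in> U" "\<And>y. y \<in> U \<Longrightarrow> qf (cadj A ** A) y \<le> qf (cadj A ** A) xs"
    using continuous_attains_sup[OF cU _ continuous_on_subset[OF qf_cont[of "cadj A ** A"] subset_UNIV]] x0U
    by blast
  define c where "c = (norm (A *v xs))^2"
  have c0: "c \<ge> 0" unfolding c_def by simp
  have bnd: "(norm (A *v x))^2 \<le> c" if "x \<in> U" for x
    using xs(2)[OF that] unfolding c_def qf_AA .
  have bound1: "(norm (A *v x))^2 \<le> c" if "norm x = 1" "qf B1 x \<ge> 0" for x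
    using bnd that unfolding U_def by auto
  have bound2: "(norm (A *v x))^2 \<le> c" if "norm x = 1" "qf B2 x \<ge> 0" for x
    using bnd that unfolding U_def by auto
  define I1 where "I1 = Inf {g. \<exists>\<tau>. \<tau> \<ge> 0 \<and> g \<ge> 0 \<and>
            neg_semidef (cadj A ** A - cscale (complex_of_real g) (mat 1) + \<tau> *\<^sub>R B1)}"
  define I2 where "I2 = Inf {g. \<exists>\<tau>. \<tau> \<ge> 0 \<and> g \<ge> 0 \<and>
            neg_semidef (cadj A ** A - cscale (complex_of_real g) (mat 1) + \<tau> *\<^sub>R B2)}"
  note v1 = sdp_value[OF hB1 c0 bound1, folded I1_def]
  note v2 = sdp_value[OF hB2 c0 bound2, folded I2_def]
  have "c \<le> max I1 I2"
    using xs(1) v1(3) v2(3) unfolding U_def c_def by (auto simp: le_max_iff_disj)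
  then have mx: "max I1 I2 = c" using v1(1) v2(1) by simp
  have "max (sqrt I1) (sqrt I2) = sqrt (max I1 I2)"
    by (cases "I1 \<le> I2") (auto simp: max_def)
  also have "... = norm (A *v xs)" unfolding mx c_def by simp
  finally have rhs: "max (sqrt I1) (sqrt I2) = norm (A *v xs)" .
  have inR: "norm (A *v x) \<in> gain_range \<theta> A" if "x \<in> U" for x
  proof -
    have "norm x = 1" using that unfolding U_def by simp
    moreover have "\<not> (- \<theta> < Arg (z x) \<and> Arg (z x) < \<theta>)"
      using condU[OF \<open>norm x = 1\<close>] that unfolding U_def by simp
    ultimately show ?thesis unfolding gain_range_def DW_def z_def
      by (auto intro!: exI[of _ "cinner x (A *v x)"])
  qed
  have leR: "h \<le> norm (A *v xs)" if hR: "h \<in> gain_range \<theta> A" for h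
  proof -
    obtain w where h0: "h \<ge> 0" and cw: "\<not> (- \<theta> < Arg w \<and> Arg w < \<theta>)"
      and wD: "(Re w, Im w, h^2) \<in> DW A"
      using hR unfolding gain_range_def by blast
    then obtain x where nx: "norm x = 1" and
      e: "(Re w, Im w, h^2) = (Re (z x), Im (z x), (norm (A *v x))^2)"
      unfolding DW_def z_def by blast
    have wRe: "Re w = Re (z x)" and wIm: "Im w = Im (z x)" and h2: "h^2 = (norm (A *v x))^2"
      using e by auto
    have hx: "h = norm (A *v x)" using h2 h0 by (simp add: power2_eq_iff_nonneg)
    have "w = z x" using wRe wIm by (simp add: complex_eqI)
    then have "x \<in> U" using condU[OF nx] cw nx unfolding U_def by simp
    then have "(norm (A *v x))^2 \<le> (norm (A *v xs))^2" using bnd unfolding c_def by blast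
    then show ?thesis unfolding hx by (rule power2_le_imp_le) simp
  qed
  have "cgain \<theta> A = norm (A *v xs)"
    unfolding cgain_def by (rule Greatest_equality) (use inR[OF xs(1)] leR in auto)
  then show ?thesis using rhs unfolding I1_def I2_def B1_def B2_def by simp
qed

end
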